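(* Let $\operatorname{St}_\eta\subset\mathbb{Z}^{E(\Gamma)}=C_1(\Gamma,\mathbb{Z})$ be the set of $\vec n=(n_e)_{e\in E(\Gamma)}$ such that $$\Big(\prod_{e\in E(\Gamma)}\{k\in\mathbb{Z}: Nn_e\le k\le N(n_e+1)\}\Big)\cap d_\Gamma^{-1}(-\eta)\neq\emptyset .$$ Then for every integer $M>0$, the set $\operatorname{St}_\eta$ is a union of finitely many orbits of the group $H_1(\Gamma,M\mathbb{Z})$ acting on $C_1(\Gamma,\mathbb{Z})$ by translations.
   Context: $\Gamma$ is a finite graph with vertex set $V(\Gamma)$ and edge set $E(\Gamma)$ (loops and multiple edges allowed), with an auxiliary orientation. $C_1(\Gamma,\mathbb{Z})=\mathbb{Z}^{E(\Gamma)}$, $\overline{C}_0(\Gamma,\mathbb{Z})\subset\mathbb{Z}^{V(\Gamma)}$ is the group of integer $0$-chains whose coordinates sum to zero, $d_\Gamma\colon C_1(\Gamma,\mathbb{Z})\to\overline{C}_0(\Gamma,\mathbb{Z})$ is the boundary map, $H_1(\Gamma,\mathbb{Z})=\ker d_\Gamma$ and $H_1(\Gamma,M\mathbb{Z})=H_1(\Gamma,\mathbb{Z})\cap (M\mathbb{Z})^{E(\Gamma)}$. Here $\eta\in\overline{C}_0(\Gamma,\mathbb{Z})$ and $N\geq 1$ is a fixed integer. *)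

theory Defs
  imports Main
begin

text \<open>A finite graph: finite vertex set V, finite edge set E, and an auxiliary
orientation given by source/target maps (loops and multiple edges allowed).\<close>

definition graph :: "'v set \<Rightarrow> 'e set \<Rightarrow> ('e \<Rightarrow> 'v) \<Rightarrow> ('e \<Rightarrow> 'v) \<Rightarrow> bool" where
  "graph V E src tgt \<longleftrightarrow> finite V \<and> finite E \<and> (\<forall>e\<in>E. src e \<in> V \<and> tgt e \<in> V)"

definition C1 :: "'e set \<Rightarrow> ('e \<Rightarrow> int) set" where
  "C1 E = {c. \<forall>e. e \<notin> E \<longrightarrow> c e = 0}"

definition C0bar :: "'v set \<Rightarrow> ('v \<Rightarrow> int) set" where
  "C0bar V = {a. (\<forall>v. v \<notin> V \<longrightarrow> a v = 0) \<and> (\<Sum>v\<in>V. a v) = 0}"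

text \<open>Boundary map: d(e) = tgt e - src e.\<close>
definition bd :: "'v set \<Rightarrow> 'e set \<Rightarrow> ('e \<Rightarrow> 'v) \<Rightarrow> ('e \<Rightarrow> 'v) \<Rightarrow> ('e \<Rightarrow> int) \<Rightarrow> ('v \<Rightarrow> int)" where
  "bd V E src tgt c = (\<lambda>v. if v \<in> V then
      (\<Sum>e\<in>{e\<in>E. tgt e = v}. c e) - (\<Sum>e\<in>{e\<in>E. src e = v}. c e) else 0)"

definition H1M :: "'v set \<Rightarrow> 'e set \<Rightarrow> ('e \<Rightarrow> 'v) \<Rightarrow> ('e \<Rightarrow> 'v) \<Rightarrow> int \<Rightarrow> ('e \<Rightarrow> int) set" where
  "H1M V E src tgt M = {h \<in> C1 E. bd V E src tgt h = (\<lambda>v. 0) \<and> (\<forall>e\<in>E. M dvd h e)}"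

definition St :: "'v set \<Rightarrow> 'e set \<Rightarrow> ('e \<Rightarrow> 'v) \<Rightarrow> ('e \<Rightarrow> 'v) \<Rightarrow> int \<Rightarrow> ('v \<Rightarrow> int) \<Rightarrow> ('e \<Rightarrow> int) set" where
  "St V E src tgt N \<eta> = {n \<in> C1 E. \<exists>k \<in> C1 E.
      (\<forall>e\<in>E. N * n e \<le> k e \<and> k e \<le> N * (n e + 1)) \<and> bd V E src tgt k = (\<lambda>v. - \<eta> v)}"

definition orbit_tr :: "('e \<Rightarrow> int) set \<Rightarrow> ('e \<Rightarrow> int) \<Rightarrow> ('e \<Rightarrow> int) set" where
  "orbit_tr H x = {(\<lambda>e. x e + h e) | h. h \<in> H}"

end

theory Submission
  imports Defs
begin

lemma bd_add: "bd V E s t (\<lambda>e. a e + b e) = (\<lambda>v. bd V E s t a v + bd V E s t b v)"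
  by (auto simp: bd_def sum.distrib fun_eq_iff)

lemma bd_diff: "bd V E s t (\<lambda>e. a e - b e) = (\<lambda>v. bd V E s t a v - bd V E s t b v)"
  by (auto simp: bd_def sum_subtractf fun_eq_iff)

lemma bd_cmult: "bd V E s t (\<lambda>e. c * a e) = (\<lambda>v. c * bd V E s t a v)"
  by (auto simp: bd_def sum_distrib_left right_diff_distrib fun_eq_iff)

lemma St_inv:
  assumes n: "n \<in> St V E s t N \<eta>" and h: "h \<in> H1M V E s t M"
  shows "(\<lambda>e. n e + h e) \<in> St V E s t N \<eta>"
proof -
  from n obtain k where k: "k \<in> C1 E" "\<forall>e\<in>E. N * n e \<le> k e \<and> k e \<le> N * (n e + 1)"
    "bd V E s t k = (\<lambda>v. - \<eta> v)" and nC: "n \<in> C1 E" unfolding St_def by blast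
  from h have hC: "h \<in> C1 E" and hb: "bd V E s t h = (\<lambda>v. 0)" unfolding H1M_def by auto
  let ?k = "\<lambda>e. k e + N * h e"
  have "?k \<in> C1 E" using k(1) hC by (auto simp: C1_def)
  moreover have "\<forall>e\<in>E. N * (n e + h e) \<le> ?k e \<and> ?k e \<le> N * ((n e + h e) + 1)"
    using k(2) by (auto simp: algebra_simps)
  moreover have "bd V E s t ?k = (\<lambda>v. - \<eta> v)"
    by (simp add: bd_add bd_cmult hb k(3))
  moreover have "(\<lambda>e. n e + h e) \<in> C1 E" using nC hC by (auto simp: C1_def)
  ultimately show ?thesis unfolding St_def by (auto intro!: bexI[where x="?k"])
qed

theorem lemma2p19:
  fixes V :: "'v set" and E :: "'e set" and src tgt :: "'e \<Rightarrow> 'v"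
    and N M :: int and \<eta> :: "'v \<Rightarrow> int"
  assumes "graph V E src tgt"
    and "\<eta> \<in> C0bar V"
    and "N \<ge> 1"
    and "M > 0"
  shows "\<exists>F. finite F \<and> F \<subseteq> C1 E \<and>
           St V E src tgt N \<eta> = (\<Union>x\<in>F. orbit_tr (H1M V E src tgt M) x)"
proof -
  let ?S = "St V E src tgt N \<eta>"
  let ?H = "H1M V E src tgt M"
  have fE: "finite E" using assms(1) unfolding graph_def by auto
  define P where "P n k \<longleftrightarrow> k \<in> C1 E \<and> (\<forall>e\<in>E. N * n e \<le> k e \<and> k e \<le> N * (n e + 1))
      \<and> bd V E src tgt k = (\<lambda>v. - \<eta> v)" for n k
  define K where "K n = (SOME k. P n k)" for n
  have PK: "P n (K n)" if "n \<in> ?S" for n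
  proof -
    from that have "\<exists>k. P n k" unfolding St_def P_def by blast
    then show ?thesis unfolding K_def by (rule someI_ex)
  qed
  define \<phi> where "\<phi> n = ((\<lambda>e. K n e mod (N*M)), (\<lambda>e. K n e - N * n e))" for n
  define A where "A = {f. \<forall>x. (x \<in> E \<longrightarrow> f x \<in> {-(N*M)..N*M}) \<and> (x \<notin> E \<longrightarrow> f x = (0::int))}"
  have fA: "finite A" unfolding A_def by (rule finite_set_of_finite_funs[OF fE]) simp
  have NM: "N * M > 0" using assms by simp
  have "\<phi> ` ?S \<subseteq> A \<times> A"
  proof
    fix p assume "p \<in> \<phi> ` ?S"
    then obtain n where n: "n \<in> ?S" and p: "p = \<phi> n" by blast
    have nC: "n \<in> C1 E" using n unfolding St_def by auto
    have P: "P n (K n)" using PK[OF n] .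
    have "(\<lambda>e. K n e mod (N*M)) \<in> A"
      using P NM unfolding A_def P_def C1_def
      by (auto simp: pos_mod_bound pos_mod_sign less_imp_le intro: order_trans[of _ 0])
    moreover have "(\<lambda>e. K n e - N * n e) \<in> A"
    proof -
      have NM': "N \<le> N * M" using assms by (simp add: mult_le_cancel_left1)
      have "K n e - N * n e \<in> {-(N*M)..N*M}" if "e \<in> E" for e
      proof -
        have "N * n e \<le> K n e \<and> K n e \<le> N * (n e + 1)" using P that unfolding P_def by blast
        then have "N * n e \<le> K n e" "K n e \<le> N * n e + N" by (simp_all add: distrib_left)
        then show ?thesis using NM' NM unfolding atLeastAtMost_iff by (intro conjI; linarith)
      qed
      then show ?thesis using P nC unfolding A_def P_def C1_def by auto
    qed
    ultimately show "p \<in> A \<times> A" using p \<phi>_def by simp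
  qed
  hence fphi: "finite (\<phi> ` ?S)" using fA finite_subset by blast
  define r where "r p = (SOME n. n \<in> ?S \<and> \<phi> n = p)" for p
  have r: "r (\<phi> n) \<in> ?S \<and> \<phi> (r (\<phi> n)) = \<phi> n" if "n \<in> ?S" for n
  proof -
    have "n \<in> ?S \<and> \<phi> n = \<phi> n" using that by simp
    thus ?thesis unfolding r_def by (rule someI[where P="\<lambda>m. m \<in> ?S \<and> \<phi> m = \<phi> n"])
  qed
  define F where "F = r ` (\<phi> ` ?S)"
  have FS: "F \<subseteq> ?S" using r unfolding F_def by blast
  have key: "n \<in> orbit_tr ?H (r (\<phi> n))" if n: "n \<in> ?S" for n
  proof -
    let ?x = "r (\<phi> n)"
    have x: "?x \<in> ?S" and eq: "\<phi> ?x = \<phi> n" using r[OF n] by auto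
    have Px: "P ?x (K ?x)" and Pn: "P n (K n)" using PK x n by auto
    have nC: "n \<in> C1 E" and xC: "?x \<in> C1 E" using n x unfolding St_def by auto
    define h where "h e = n e - ?x e" for e
    have e1: "K ?x e mod (N*M) = K n e mod (N*M)" and e2: "K ?x e - N * ?x e = K n e - N * n e" for e
      using eq unfolding \<phi>_def by (auto dest: fun_cong)
    have Nh: "N * h e = K n e - K ?x e" for e using e2[of e] unfolding h_def by (simp add: algebra_simps)
    have hC: "h \<in> C1 E" using nC xC unfolding h_def C1_def by auto
    have "bd V E src tgt (\<lambda>e. N * h e) = (\<lambda>v. 0)"
      using Px Pn unfolding Nh P_def by (simp add: bd_diff)
    hence "(\<lambda>v. N * bd V E src tgt h v) = (\<lambda>v. 0)" by (simp add: bd_cmult)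
    hence hb: "bd V E src tgt h = (\<lambda>v. 0)" using assms(3) by (auto simp: fun_eq_iff)
    have "M dvd h e" for e
    proof -
      have "(N*M) dvd (K n e - K ?x e)" using e1[of e] by (metis mod_eq_dvd_iff)
      hence "(N*M) dvd (N * h e)" by (simp add: Nh)
      thus ?thesis using assms(3) by simp
    qed
    hence "h \<in> ?H" using hC hb unfolding H1M_def by auto
    moreover have "n = (\<lambda>e. ?x e + h e)" unfolding h_def by auto
    ultimately show ?thesis unfolding orbit_tr_def by blast
  qed
  have "?S = (\<Union>x\<in>F. orbit_tr ?H x)"
  proof
    show "?S \<subseteq> (\<Union>x\<in>F. orbit_tr ?H x)" using key unfolding F_def by blast
    show "(\<Union>x\<in>F. orbit_tr ?H x) \<subseteq> ?S"
      using FS St_inv unfolding orbit_tr_def by blast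
  qed
  moreover have "F \<subseteq> C1 E" using FS unfolding St_def by auto
  moreover have "finite F" unfolding F_def using fphi by simp
  ultimately show ?thesis by blast
qed

end
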